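(* Let $\mathbb F$ be a field, $d\ge 1$ and $1\le m\le d$ integers, $\sigma\in\mathbb Z^d$ a signature vector, $\psi=(\psi_1,\dots,\psi_d)\in\mathbb F^d$, and let $\mathbf D$ be a $(d;m)$ signed determinant message matrix with signature $\sigma$ (for any admissible choice of its symbols). Let $\Xi=\Xi^{(m)}_{\sigma,\psi}$ be the repair-encoder matrix. Then for every $m$-subset $\mathcal I\subseteq[d]$, $$\sum_{y=1}^{d}\psi_y\,\mathbf D_{y,\mathcal I}=\sum_{i\in\mathcal I}(-1)^{\sigma(i)+\mathrm{ind}_{\mathcal I}(i)}\,[\mathbf D\,\Xi]_{i,\mathcal I\setminus\{i\}}.$$
   Context: Notation: $[d]=\{1,\dots,d\}$; for a finite set $\mathcal I$ of integers and an integer $x$, $\mathrm{ind}_{\mathcal I}(x)=|\{y\in\mathcal I: y\le x\}|$. $(d;m)$ signed determinant message matrix with signature $\sigma$: choose values $v_{x,\mathcal X}\in\mathbb F$ for every $m$-subset $\mathcal X\subseteq[d]$ and $x\in\mathcal X$, and values $w_{y,\mathcal Y}\in\mathbb F$ for every $(m+1)$-subset $\mathcal Y\subseteq[d]$ and $y\in\mathcal Y$, such that for every such $\mathcal Y$ the parity equation $\sum_{y\in\mathcal Y}(-1)^{\mathrm{ind}_{\mathcal Y}(y)}w_{y,\mathcal Y}=0$ holds (the values $w_{y,\mathcal Y}$ with $y<\max\mathcal Y$ and all $v$'s are free; $w_{\max\mathcal Y,\mathcal Y}$ is determined by the parity equation). $\mathbf D$ has rows indexed by $x\in[d]$ and columns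 indexed by $m$-subsets $\mathcal I\subseteq[d]$, with $\mathbf D_{x,\mathcal I}=(-1)^{\sigma(x)}v_{x,\mathcal I}$ if $x\in\mathcal I$ and $\mathbf D_{x,\mathcal I}=(-1)^{\sigma(x)}w_{x,\mathcal I\cup\{x\}}$ if $x\notin\mathcal I$. (For $m=0$, $\mathbf D$ is the all-zero $d\times 1$ matrix with column indexed by $\varnothing$.) Repair-encoder matrix $\Xi^{(m)}_{\sigma,\psi}$: rows indexed by $m$-subsets $\mathcal I\subseteq[d]$, columns by $(m-1)$-subsets $\mathcal J\subseteq[d]$, with entry $(-1)^{\sigma(y)+\mathrm{ind}_{\mathcal I}(y)}\psi_y$ if $\mathcal J\subseteq\mathcal I$ and $\mathcal I\setminus\mathcal J=\{y\}$, and $0$ otherwise. *)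

theory Defs
  imports Main
begin

definition ind :: "nat set \<Rightarrow> nat \<Rightarrow> nat" where
  "ind I x = card {y \<in> I. y \<le> x}"

definition subsets_of :: "nat \<Rightarrow> nat \<Rightarrow> nat set set" where
  "subsets_of d k = {X. X \<subseteq> {1..d} \<and> card X = k}"

definition parity_ok :: "nat \<Rightarrow> nat \<Rightarrow> (nat \<Rightarrow> nat set \<Rightarrow> 'a::field) \<Rightarrow> bool" where
  "parity_ok d m w \<longleftrightarrow>
     (\<forall>Y \<in> subsets_of d (m+1). (\<Sum>y\<in>Y. (-1) ^ ind Y y * w y Y) = 0)"

definition sdmm :: "(nat \<Rightarrow> int) \<Rightarrow> (nat \<Rightarrow> nat set \<Rightarrow> 'a::field) \<Rightarrow> (nat \<Rightarrow> nat set \<Rightarrow> 'a)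
                     \<Rightarrow> nat \<Rightarrow> nat set \<Rightarrow> 'a" where
  "sdmm \<sigma> v w x I = (-1) powi \<sigma> x * (if x \<in> I then v x I else w x (insert x I))"

definition Xi :: "(nat \<Rightarrow> int) \<Rightarrow> (nat \<Rightarrow> 'a::field) \<Rightarrow> nat set \<Rightarrow> nat set \<Rightarrow> 'a" where
  "Xi \<sigma> \<psi> I J = (if J \<subseteq> I \<and> (\<exists>y. I - J = {y})
      then (let y = the_elem (I - J) in (-1) powi (\<sigma> y + int (ind I y)) * \<psi> y)
      else 0)"

definition DXi :: "nat \<Rightarrow> nat \<Rightarrow> (nat \<Rightarrow> int) \<Rightarrow> (nat \<Rightarrow> 'a::field) \<Rightarrow> (nat \<Rightarrow> nat set \<Rightarrow> 'a)
                   \<Rightarrow> (nat \<Rightarrow> nat set \<Rightarrow> 'a) \<Rightarrow> nat \<Rightarrow> nat set \<Rightarrow> 'a" where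
  "DXi d m \<sigma> \<psi> v w x J = (\<Sum>K\<in>subsets_of d m. sdmm \<sigma> v w x K * Xi \<sigma> \<psi> K J)"

end

theory Submission
  imports Defs
begin

lemma m1_split: "((-1::'a::field) powi (s + int n)) = (-1) powi s * (-1)^n"
  by (simp add: power_int_add)

lemma m1_sq: "((-1::'a::field) powi s) * (-1) powi s = 1"
  by (simp flip: power_int_mult_distrib)

lemma ind_lt1:
  assumes "finite I" "i \<in> I" "y \<notin> I" "i < y"
  shows "ind (insert y I) i = ind I i"
  unfolding ind_def using assms by (intro arg_cong[where f=card]) auto

lemma ind_lt2:
  assumes "finite I" "i \<in> I" "y \<notin> I" "i < y"
  shows "ind (insert y I) y = ind (insert y (I - {i})) y + 1"
proof -
  have "{z \<in> insert y I. z \<le> y} = insert i {z \<in> insert y (I - {i}). z \<le> y}"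
    using assms by auto
  then show ?thesis unfolding ind_def using assms by simp
qed

lemma ind_gt1:
  assumes "finite I" "i \<in> I" "y \<notin> I" "y < i"
  shows "ind (insert y I) i = ind I i + 1"
proof -
  have "{z \<in> insert y I. z \<le> i} = insert y {z \<in> I. z \<le> i}"
    using assms by auto
  then show ?thesis unfolding ind_def using assms by simp
qed

lemma ind_gt2:
  assumes "finite I" "i \<in> I" "y \<notin> I" "y < i"
  shows "ind (insert y I) y = ind (insert y (I - {i})) y"
  unfolding ind_def using assms by (intro arg_cong[where f=card]) auto

lemma sign_rel:
  assumes "finite I" "i \<in> I" "y \<notin> I"
  shows "(-1::'a::field) ^ (ind I i + ind (insert y (I - {i})) y)
       = - ((-1) ^ ind (insert y I) y * (-1) ^ ind (insert y I) i)"
proof (cases "i < y")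
  case True
  then show ?thesis using ind_lt1[OF assms True] ind_lt2[OF assms True]
    by (simp add: power_add)
next
  case False
  then have "y < i" using assms by (cases "y = i") auto
  then show ?thesis using ind_gt1[OF assms \<open>y<i\<close>] ind_gt2[OF assms \<open>y<i\<close>]
    by (simp add: power_add)
qed

lemma parity_use:
  fixes w :: "nat \<Rightarrow> nat set \<Rightarrow> 'a::field"
  assumes "parity_ok d m w" "I \<in> subsets_of d m" "y \<in> {1..d}" "y \<notin> I"
  shows "(\<Sum>i\<in>I. (-1) ^ (ind I i + ind (insert y (I - {i})) y) * w i (insert y I))
         = w y (insert y I)"
proof -
  let ?Y = "insert y I"
  have fI: "finite I" using assms(2) unfolding subsets_of_def by (auto intro: finite_subset)
  have "?Y \<in> subsets_of d (m+1)" using assms fI unfolding subsets_of_def by auto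
  then have "(\<Sum>x\<in>?Y. (-1) ^ ind ?Y x * w x ?Y) = 0"
    using assms(1) unfolding parity_ok_def by blast
  then have P: "(-1) ^ ind ?Y y * w y ?Y + (\<Sum>i\<in>I. (-1) ^ ind ?Y i * w i ?Y) = 0"
    using fI assms(4) by simp
  have "(\<Sum>i\<in>I. (-1) ^ (ind I i + ind (insert y (I - {i})) y) * w i ?Y)
      = (\<Sum>i\<in>I. - ((-1) ^ ind ?Y y) * ((-1) ^ ind ?Y i * w i ?Y))"
    by (rule sum.cong) (auto simp: sign_rel[OF fI _ assms(4)])
  also have "\<dots> = - ((-1) ^ ind ?Y y) * (\<Sum>i\<in>I. (-1) ^ ind ?Y i * w i ?Y)"
    by (simp add: sum_distrib_left)
  also have "\<dots> = - ((-1) ^ ind ?Y y) * (- ((-1) ^ ind ?Y y * w y ?Y))"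
  proof -
    have "(\<Sum>i\<in>I. (-1) ^ ind ?Y i * w i ?Y) = - ((-1) ^ ind ?Y y * w y ?Y)"
      using P by (metis eq_neg_iff_add_eq_0 add.commute)
    then show ?thesis by simp
  qed
  also have "\<dots> = ((-1) ^ ind ?Y y * (-1) ^ ind ?Y y) * w y ?Y" by simp
  also have "\<dots> = w y ?Y" by (simp flip: power_add)
  finally show ?thesis .
qed

lemma DXi_red:
  assumes "I \<in> subsets_of d m" "i \<in> I"
  shows "DXi d m \<sigma> \<psi> v w i (I - {i}) =
    (\<Sum>y\<in>{1..d} - (I - {i}). sdmm \<sigma> v w i (insert y (I - {i})) *
        ((-1) powi (\<sigma> y + int (ind (insert y (I - {i})) y)) * \<psi> y))"
proof -
  let ?J = "I - {i}"
  have IS: "I \<subseteq> {1..d}" "card I = m" using assms unfolding subsets_of_def by auto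
  have fI: "finite I" using IS(1) by (auto intro: finite_subset)
  have cJ: "card ?J = m - 1" using fI assms IS by simp
  have m1: "m \<ge> 1" using assms fI IS by (metis One_nat_def Suc_leI card_gt_0_iff empty_iff)
  let ?S = "(\<lambda>y. insert y ?J) ` ({1..d} - ?J)"
  have fin: "finite (subsets_of d m)"
    unfolding subsets_of_def by (rule finite_subset[of _ "Pow {1..d}"]) auto
  have sub: "?S \<subseteq> subsets_of d m"
  proof
    fix K assume "K \<in> ?S"
    then obtain y where y: "y \<in> {1..d} - ?J" "K = insert y ?J" by (rule imageE) blast
    have "finite ?J" using fI by simp
    then have "card K = m" using y cJ m1 by simp
    then show "K \<in> subsets_of d m" using y IS unfolding subsets_of_def by auto
  qed
  have zero: "\<forall>K \<in> subsets_of d m - ?S. sdmm \<sigma> v w i K * Xi \<sigma> \<psi> K ?J = 0"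
  proof
    fix K assume K: "K \<in> subsets_of d m - ?S"
    have "Xi \<sigma> \<psi> K ?J = 0"
    proof (rule ccontr)
      assume "Xi \<sigma> \<psi> K ?J \<noteq> 0"
      then obtain y where "?J \<subseteq> K" "K - ?J = {y}" unfolding Xi_def by (auto split: if_splits)
      then have "K = insert y ?J" "y \<notin> ?J" by auto
      moreover have "y \<in> {1..d}" using K \<open>K - ?J = {y}\<close> unfolding subsets_of_def by auto
      ultimately have "K \<in> ?S" by (intro image_eqI[where x=y]) auto
      then show False using K by blast
    qed
    then show "sdmm \<sigma> v w i K * Xi \<sigma> \<psi> K ?J = 0" by simp
  qed
  have "DXi d m \<sigma> \<psi> v w i ?J = (\<Sum>K\<in>?S. sdmm \<sigma> v w i K * Xi \<sigma> \<psi> K ?J)"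
    unfolding DXi_def using sum.mono_neutral_right[OF fin sub zero] by simp
  also have "\<dots> = (\<Sum>y\<in>{1..d} - ?J. sdmm \<sigma> v w i (insert y ?J) * Xi \<sigma> \<psi> (insert y ?J) ?J)"
    by (rule sum.reindex_cong[where l="\<lambda>y. insert y ?J"]) (auto simp: inj_on_def)
  also have "\<dots> = (\<Sum>y\<in>{1..d} - ?J. sdmm \<sigma> v w i (insert y ?J) *
        ((-1) powi (\<sigma> y + int (ind (insert y ?J) y)) * \<psi> y))"
  proof (rule sum.cong)
    fix y assume "y \<in> {1..d} - ?J"
    then have "insert y ?J - ?J = {y}" by auto
    then show "sdmm \<sigma> v w i (insert y ?J) * Xi \<sigma> \<psi> (insert y ?J) ?J = sdmm \<sigma> v w i (insert y ?J) *
        ((-1) powi (\<sigma> y + int (ind (insert y ?J) y)) * \<psi> y)"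
      unfolding Xi_def by (auto simp: Let_def)
  qed simp
  finally show ?thesis .
qed

theorem proposition3:
  fixes d m :: nat and \<sigma> :: "nat \<Rightarrow> int" and \<psi> :: "nat \<Rightarrow> 'a::field"
    and v w :: "nat \<Rightarrow> nat set \<Rightarrow> 'a" and I :: "nat set"
  assumes "1 \<le> d" and "1 \<le> m" and "m \<le> d"
    and "parity_ok d m w"
    and "I \<in> subsets_of d m"
  shows "(\<Sum>y=1..d. \<psi> y * sdmm \<sigma> v w y I) =
         (\<Sum>i\<in>I. (-1) powi (\<sigma> i + int (ind I i)) * DXi d m \<sigma> \<psi> v w i (I - {i}))"
proof -
  have IS: "I \<subseteq> {1..d}" using assms unfolding subsets_of_def by auto
  have fI: "finite I" using IS by (auto intro: finite_subset)
  define T where "T i y = (-1) powi (\<sigma> i + int (ind I i)) * (sdmm \<sigma> v w i (insert y (I - {i})) *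
        ((-1) powi (\<sigma> y + int (ind (insert y (I - {i})) y)) * \<psi> y))" for i y
  have "(\<Sum>i\<in>I. (-1) powi (\<sigma> i + int (ind I i)) * DXi d m \<sigma> \<psi> v w i (I - {i}))
      = (\<Sum>i\<in>I. (\<Sum>y\<in>{1..d} - (I - {i}). T i y))"
    by (rule sum.cong) (auto simp: DXi_red[OF assms(5)] sum_distrib_left T_def)
  also have "\<dots> = (\<Sum>i\<in>I. T i i + (\<Sum>y\<in>{1..d} - I. T i y))"
  proof (rule sum.cong)
    fix i assume i: "i \<in> I"
    have "{1..d} - (I - {i}) = insert i ({1..d} - I)" using i IS by auto
    then show "(\<Sum>y\<in>{1..d} - (I - {i}). T i y) = T i i + (\<Sum>y\<in>{1..d} - I. T i y)"
      using i by (simp add: sum.insert)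
  qed simp
  also have "\<dots> = (\<Sum>i\<in>I. \<psi> i * sdmm \<sigma> v w i I) + (\<Sum>y\<in>{1..d} - I. \<Sum>i\<in>I. T i y)"
  proof -
    have "T i i = \<psi> i * sdmm \<sigma> v w i I" if "i \<in> I" for i
    proof -
      have "insert i (I - {i}) = I" using that by auto
      then have "T i i = ((-1) powi (\<sigma> i + int (ind I i)) * (-1) powi (\<sigma> i + int (ind I i)))
               * (\<psi> i * sdmm \<sigma> v w i I)"
        unfolding T_def by (simp add: ac_simps)
      then show ?thesis by (simp only: m1_sq mult_1)
    qed
    then show ?thesis by (simp add: sum.distrib sum.swap[of _ I])
  qed
  also have "(\<Sum>y\<in>{1..d} - I. \<Sum>i\<in>I. T i y) = (\<Sum>y\<in>{1..d} - I. \<psi> y * sdmm \<sigma> v w y I)"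
  proof (rule sum.cong)
    fix y assume y: "y \<in> {1..d} - I"
    have "T i y = ((-1) powi \<sigma> i * (-1) powi \<sigma> i) * (\<psi> y * (-1) powi \<sigma> y *
        ((-1) ^ (ind I i + ind (insert y (I - {i})) y) * w i (insert y I)))" if i: "i \<in> I" for i
    proof -
      have "i \<notin> insert y (I - {i})" using i y by auto
      moreover have "insert i (insert y (I - {i})) = insert y I" using i by auto
      ultimately show ?thesis unfolding T_def sdmm_def
        by (simp add: m1_split power_add ac_simps)
    qed
    then have "(\<Sum>i\<in>I. T i y) = \<psi> y * (-1) powi \<sigma> y *
        (\<Sum>i\<in>I. (-1) ^ (ind I i + ind (insert y (I - {i})) y) * w i (insert y I))"
      by (simp add: m1_sq sum_distrib_left)
    also have "\<dots> = \<psi> y * (-1) powi \<sigma> y * w y (insert y I)"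
      using parity_use[OF assms(4,5)] y by simp
    also have "\<dots> = \<psi> y * sdmm \<sigma> v w y I" using y by (simp add: sdmm_def)
    finally show "(\<Sum>i\<in>I. T i y) = \<psi> y * sdmm \<sigma> v w y I" .
  qed simp
  also have "(\<Sum>i\<in>I. \<psi> i * sdmm \<sigma> v w i I) + (\<Sum>y\<in>{1..d} - I. \<psi> y * sdmm \<sigma> v w y I)
      = (\<Sum>y=1..d. \<psi> y * sdmm \<sigma> v w y I)"
    using sum.subset_diff[OF IS, of "\<lambda>y. \<psi> y * sdmm \<sigma> v w y I"] by (simp add: add.commute)
  finally show ?thesis by simp
qed

end
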